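(* For every $n\ge1$, the number of permutations $\pi$ of $\{1,\dots,n\}$ whose Schröder insertion tableau $P(\pi)$ consists of a single column (every row has at most $2$ cells) is $2^{n-1}$.
   Context: A Schröder tableau consists of rows $1,2,\dots$; row $r$ has $\lambda_r$ cells at positions $1,\dots,\lambda_r$, each filled with a number; cells at odd positions are upper triangles, at even positions lower triangles. The Schröder insertion tableau $P(\pi)$ of $\pi=\pi_1\cdots\pi_n$ is built as follows. Start with $P$ having one row containing $\pi_1$. For $k=2,\dots,n$, insert $\alpha=\pi_k$ into row $i=1$ by the rule: if row $i$ is empty or $\alpha$ is larger than all its entries, place $\alpha$ in a new cell at the end of row $i$ and stop. Otherwise let $j$ be the position in row $i$ of the smallest entry larger than $\alpha$. If $j$ is even: remove the entry $\beta$ at position $j$, write $\alpha$ there, and insert $\beta$ into row $i+1$ by the same rule. If $j$ is odd and position $j+1$ exists in row $i$ with entry $\beta$: move the entry of position $j$ to position $j+1$, write $\alpha$ at position $j$, and insert $\beta$ into row $i+1$. If $j$ is odd and is the last position of row $i$: move the entry of position $j$ into a new cell at position $j+1$ at the end of row $i$, write $\alpha$ at position $j$, and stop. The final $P$ is $P(\pi)$. *)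

theory Defs
  imports Main
begin

text \<open>A Schroeder tableau is a list of rows (row 1 first); each row is the list of
entries at positions 1,2,...  (list index k corresponds to position k+1, so odd
positions = upper triangles are even list indices).\<close>

definition succ_idx :: "nat \<Rightarrow> nat list \<Rightarrow> nat" where
  "succ_idx a r = (LEAST k. k < length r \<and> r ! k = Min {x \<in> set r. a < x})"

fun schroeder_ins :: "nat \<Rightarrow> nat list list \<Rightarrow> nat list list" where
  "schroeder_ins a [] = [[a]]"
| "schroeder_ins a (r # rs) =
    (if r = [] \<or> (\<forall>x\<in>set r. x < a) then (r @ [a]) # rs
     else (let k = succ_idx a r in
       if odd k then
         (r[k := a]) # schroeder_ins (r ! k) rs
       else if k + 1 < length r then
         (r[k := a, k + 1 := r ! k]) # schroeder_ins (r ! (k + 1)) rs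
       else
         (r[k := a] @ [r ! k]) # rs))"

definition schroeder_P :: "nat list \<Rightarrow> nat list list" where
  "schroeder_P \<pi> = fold schroeder_ins (tl \<pi>) [[hd \<pi>]]"

end

theory Submission
  imports Defs
begin

fun pairs :: "nat list \<Rightarrow> nat list list" where
  "pairs [] = []"
| "pairs [a] = [[a]]"
| "pairs (a # b # rest) = [a, b] # pairs rest"

fun gr :: "nat list \<Rightarrow> bool" where
  "gr [] = True"
| "gr (x # rs) = (gr rs \<and> card {y \<in> set rs. y < x} \<le> 1)"

lemma si0: "x < a \<Longrightarrow> a < b \<Longrightarrow> succ_idx x [a, b] = 0"
proof -
  assume h: "x < a" "a < b"
  have "{y \<in> set [a, b]. x < y} = {a, b}" using h by auto
  hence "Min {y \<in> set [a, b]. x < y} = a" using h by simp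
  thus ?thesis unfolding succ_idx_def by (intro Least_equality) auto
qed

lemma si1: "a < x \<Longrightarrow> x < b \<Longrightarrow> succ_idx x [a, b] = 1"
proof -
  assume h: "a < x" "x < b"
  have "{y \<in> set [a, b]. x < y} = {b}" using h by auto
  hence "Min {y \<in> set [a, b]. x < y} = b" by simp
  thus ?thesis unfolding succ_idx_def using h
    by (intro Least_equality) (auto simp: less_Suc_eq nth_Cons split: nat.splits)
qed

lemma si_single: "x < a \<Longrightarrow> succ_idx x [a] = 0"
proof -
  assume h: "x < a"
  have "{y \<in> set [a]. x < y} = {a}" using h by auto
  hence "Min {y \<in> set [a]. x < y} = a" by simp
  thus ?thesis unfolding succ_idx_def by (intro Least_equality) auto
qed

lemma L: "sorted_wrt (<) c \<Longrightarrow> x \<notin> set c \<Longrightarrow> (length c \<le> 1 \<or> x < c ! 1)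
   \<Longrightarrow> schroeder_ins x (pairs c) = pairs (insort x c)"
proof (induction c arbitrary: x rule: pairs.induct)
  case 1
  then show ?case by simp
next
  case (2 a)
  then show ?case
    by (cases "x < a") (auto simp: si_single Let_def)
next
  case (3 a b rest)
  have ab: "a < b" and br: "\<forall>y\<in>set rest. b < y" and sr: "sorted_wrt (<) rest"
    using "3.prems"(1) by auto
  have xb: "x < b" using "3.prems"(3) by simp
  have ins_b: "schroeder_ins b (pairs rest) = pairs (b # rest)"
  proof -
    have "schroeder_ins b (pairs rest) = pairs (insort b rest)"
      using "3.IH" sr br
      by (metis less_irrefl nth_mem not_le_imp_less le_less_trans less_imp_le
          Suc_1 le_Suc_eq less_one linorder_neqE_nat)
    also have "insort b rest = b # rest" using br by (simp add: insort_is_Cons less_imp_le)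
    finally show ?thesis .
  qed
  show ?case
  proof (cases "x < a")
    case True
    then show ?thesis using ab ins_b br
      by (auto simp: si0 Let_def)
  next
    case False
    hence "a < x" using "3.prems"(2) by auto
    then show ?thesis using ab xb ins_b br
      by (auto simp: si1 Let_def)
  qed
qed

lemma Bad: "sorted_wrt (<) c \<Longrightarrow> 2 \<le> length c \<Longrightarrow> c ! 1 < x
   \<Longrightarrow> \<exists>row\<in>set (schroeder_ins x (pairs c)). 2 < length row"
proof -
  assume h: "sorted_wrt (<) c" "2 \<le> length c" "c ! 1 < x"
  then obtain a b rest where c: "c = a # b # rest"
    by (metis One_nat_def Suc_1 Suc_le_length_iff)
  have "a < b" "b < x" using h c by auto
  hence "schroeder_ins x (pairs c) = [a, b, x] # pairs rest" using c by simp
  thus ?thesis by simp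
qed

lemma MonoH: "length r \<le> length r' \<Longrightarrow> length rs \<le> length rs' \<Longrightarrow>
  (\<forall>i<length rs. length (rs ! i) \<le> length (rs' ! i)) \<Longrightarrow>
  length (r # rs) \<le> length (r' # rs') \<and>
  (\<forall>i<length (r # rs). length ((r # rs) ! i) \<le> length ((r' # rs') ! i))"
  by (auto simp: nth_Cons split: nat.splits)

lemma Mono: "length T \<le> length (schroeder_ins x T) \<and>
  (\<forall>i<length T. length (T ! i) \<le> length (schroeder_ins x T ! i))"
proof (induction T arbitrary: x)
  case Nil
  then show ?case by simp
next
  case (Cons r rs)
  show ?case
  proof (cases "r = [] \<or> (\<forall>y\<in>set r. y < x)")
    case True
    hence e: "schroeder_ins x (r # rs) = (r @ [x]) # rs" by simp
    show ?thesis unfolding e by (rule MonoH) auto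
  next
    case False
    define k where "k = succ_idx x r"
    show ?thesis
    proof (cases "odd k")
      case True
      hence e: "schroeder_ins x (r # rs) = (r[k := x]) # schroeder_ins (r ! k) rs"
        using False by (auto simp: Let_def k_def)
      show ?thesis unfolding e by (rule MonoH) (use Cons.IH in auto)
    next
      case ev: False
      show ?thesis
      proof (cases "k + 1 < length r")
        case True
        hence e: "schroeder_ins x (r # rs) = (r[k := x, k + 1 := r ! k]) # schroeder_ins (r ! (k + 1)) rs"
          using False ev by (auto simp: Let_def k_def)
        show ?thesis unfolding e by (rule MonoH) (use Cons.IH in auto)
      next
        case False2: False
        hence e: "schroeder_ins x (r # rs) = (r[k := x] @ [r ! k]) # rs"
          using False ev by (auto simp: Let_def k_def)
        show ?thesis unfolding e by (rule MonoH) auto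
      qed
    qed
  qed
qed

lemma bad_pres: "\<exists>row\<in>set T. 2 < length row \<Longrightarrow> \<exists>row\<in>set (schroeder_ins x T). 2 < length row"
proof -
  assume "\<exists>row\<in>set T. 2 < length row"
  then obtain i where i: "i < length T" "2 < length (T ! i)" by (auto simp: in_set_conv_nth)
  have "length (T ! i) \<le> length (schroeder_ins x T ! i)" "i < length (schroeder_ins x T)"
    using Mono[of T x] i by auto
  hence m: "schroeder_ins x T ! i \<in> set (schroeder_ins x T)" by simp
  have "2 < length (schroeder_ins x T ! i)"
    using i(2) \<open>length (T ! i) \<le> length (schroeder_ins x T ! i)\<close> by linarith
  thus ?thesis using m by blast
qed

lemma pairs_rows: "row \<in> set (pairs c) \<Longrightarrow> length row \<le> 2"
  by (induction c rule: pairs.induct) auto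

lemma Br: "sorted_wrt (<) (c::nat list) \<Longrightarrow> x \<notin> set c \<Longrightarrow>
   (card {y \<in> set c. y < x} \<le> 1) \<longleftrightarrow> (length c \<le> 1 \<or> x < c ! 1)"
proof -
  assume s: "sorted_wrt (<) c" and xn: "x \<notin> set c"
  show ?thesis
  proof
    assume cd: "card {y \<in> set c. y < x} \<le> 1"
    show "length c \<le> 1 \<or> x < c ! 1"
    proof (rule ccontr)
      assume "\<not> (length c \<le> 1 \<or> x < c ! 1)"
      hence l: "2 \<le> length c" "c ! 1 \<le> x" by (auto simp: not_less)
      have "c ! 1 \<noteq> x" using xn l by (metis Suc_1 Suc_le_lessD nth_mem)
      hence "c ! 1 < x" using l by simp
      moreover have "c ! 0 < c ! 1" using s l by (simp add: sorted_wrt_iff_nth_less)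
      ultimately have "{c ! 0, c ! 1} \<subseteq> {y \<in> set c. y < x}" using l by (auto intro!: nth_mem)
      hence "card {c ! 0, c ! 1} \<le> card {y \<in> set c. y < x}" by (intro card_mono) auto
      moreover have "card {c ! 0, c ! 1} = 2" using \<open>c ! 0 < c ! 1\<close> by simp
      ultimately show False using cd by simp
    qed
  next
    assume h: "length c \<le> 1 \<or> x < c ! 1"
    show "card {y \<in> set c. y < x} \<le> 1"
    proof (cases "length c \<le> 1")
      case True
      have "card {y \<in> set c. y < x} \<le> card (set c)" by (intro card_mono) auto
      also have "\<dots> \<le> length c" by (rule card_length)
      finally show ?thesis using True by simp
    next
      case False
      hence x1: "x < c ! 1" using h by simp
      have "{y \<in> set c. y < x} \<subseteq> {c ! 0}"
      proof
        fix y assume "y \<in> {y \<in> set c. y < x}"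
        then obtain i where i: "i < length c" "c ! i = y" "y < x" by (auto simp: in_set_conv_nth)
        have "i = 0"
        proof (rule ccontr)
          assume "i \<noteq> 0"
          hence "c ! 1 \<le> c ! i" using s i
            by (cases "i = 1") (auto simp: sorted_wrt_iff_nth_less less_imp_le)
          thus False using i x1 by simp
        qed
        thus "y \<in> {c ! 0}" using i by simp
      qed
      hence "card {y \<in> set c. y < x} \<le> card {c ! 0}" by (intro card_mono) auto
      thus ?thesis by simp
    qed
  qed
qed

lemma M: "distinct xs \<Longrightarrow>
  (gr (rev xs) \<longrightarrow> fold schroeder_ins xs [] = pairs (sort xs)) \<and>
  (\<not> gr (rev xs) \<longrightarrow> (\<exists>row\<in>set (fold schroeder_ins xs []). 2 < length row))"
proof (induction xs rule: rev_induct)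
  case Nil
  then show ?case by simp
next
  case (snoc x xs)
  have d: "distinct xs" and xn: "x \<notin> set xs" using snoc.prems by auto
  note IH = snoc.IH[OF d]
  define c where "c = sort xs"
  have sc: "sorted_wrt (<) c" unfolding c_def using d
    by (simp add: strict_sorted_iff)
  have xc: "x \<notin> set c" using xn by (simp add: c_def)
  have f: "fold schroeder_ins (xs @ [x]) [] = schroeder_ins x (fold schroeder_ins xs [])" by simp
  have g: "gr (rev (xs @ [x])) = (gr (rev xs) \<and> (length c \<le> 1 \<or> x < c ! 1))"
    using Br[OF sc xc] by (simp add: c_def)
  have srt: "sort (xs @ [x]) = insort x c"
  proof (rule sorted_distinct_set_unique)
    show "sorted (sort (xs @ [x]))" by simp
    show "distinct (sort (xs @ [x]))" using snoc.prems by simp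
    show "sorted (insort x c)" by (simp add: c_def sorted_insort)
    show "distinct (insort x c)" using xc sc by (simp add: distinct_insort strict_sorted_iff)
    show "set (sort (xs @ [x])) = set (insort x c)" by (simp add: c_def set_insort_key)
  qed
  show ?case
  proof (cases "gr (rev xs)")
    case True
    hence F: "fold schroeder_ins xs [] = pairs c" using IH c_def by simp
    show ?thesis
    proof (cases "length c \<le> 1 \<or> x < c ! 1")
      case True
      have gg: "gr (rev (xs @ [x]))" using g True \<open>gr (rev xs)\<close> by blast
      show ?thesis using gg F f srt L[OF sc xc True] by simp
    next
      case False
      hence l2: "2 \<le> length c" and l3: "c ! 1 \<le> x" by (auto simp: not_less)
      have "c ! 1 \<in> set c" using l2 by (intro nth_mem) simp
      hence "c ! 1 \<noteq> x" using xc by auto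
      hence "c ! 1 < x" using l3 by simp
      have gg: "\<not> gr (rev (xs @ [x]))" using g False by blast
      have "\<exists>row\<in>set (schroeder_ins x (pairs c)). 2 < length row" using Bad[OF sc l2] \<open>c ! 1 < x\<close> by blast
      then show ?thesis unfolding f F using gg by blast
    qed
  next
    case False
    have gg: "\<not> gr (rev (xs @ [x]))" using g False by blast
    have "\<exists>row\<in>set (fold schroeder_ins xs []). 2 < length row" using IH False by blast
    hence "\<exists>row\<in>set (schroeder_ins x (fold schroeder_ins xs [])). 2 < length row" by (rule bad_pres)
    then show ?thesis unfolding f using gg by blast
  qed
qed

lemma P_fold: "\<pi> \<noteq> [] \<Longrightarrow> schroeder_P \<pi> = fold schroeder_ins \<pi> []"
  by (cases \<pi>) (auto simp: schroeder_P_def)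

lemma rows_iff: "distinct \<pi> \<Longrightarrow> \<pi> \<noteq> [] \<Longrightarrow>
   (\<forall>row \<in> set (schroeder_P \<pi>). length row \<le> 2) \<longleftrightarrow> gr (rev \<pi>)"
proof -
  assume d: "distinct \<pi>" and ne: "\<pi> \<noteq> []"
  show ?thesis
  proof (cases "gr (rev \<pi>)")
    case True
    then show ?thesis using M[OF d] P_fold[OF ne] pairs_rows by auto
  next
    case False
    then show ?thesis using M[OF d] P_fold[OF ne] by (auto simp: not_le)
  qed
qed

lemma minA: "finite S \<Longrightarrow> x \<in> S \<Longrightarrow> card {y \<in> S. y < (x::nat)} \<le> 1 \<Longrightarrow>
   x = Min S \<or> x = Min (S - {Min S})"
proof (rule ccontr)
  assume fS: "finite S" and xS: "x \<in> S" and cd: "card {y \<in> S. y < x} \<le> 1"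
    and nn: "\<not> (x = Min S \<or> x = Min (S - {Min S}))"
  have m1: "Min S < x" using Min_le[OF fS xS] nn by auto
  have x1: "x \<in> S - {Min S}" using xS nn by auto
  have m2: "Min (S - {Min S}) < x" using Min_le[OF _ x1] fS nn by auto
  have m2S: "Min (S - {Min S}) \<in> S - {Min S}" using x1 fS by (intro Min_in) auto
  have m1S: "Min S \<in> S" using xS fS by (intro Min_in) auto
  have "{Min S, Min (S - {Min S})} \<subseteq> {y \<in> S. y < x}" using m1 m2 m2S m1S by auto
  hence "card {Min S, Min (S - {Min S})} \<le> card {y \<in> S. y < x}" using fS by (intro card_mono) auto
  moreover have "card {Min S, Min (S - {Min S})} = 2" using m2S by auto
  ultimately show False using cd by simp
qed

lemma count: "finite S \<Longrightarrow> card S = Suc n \<Longrightarrow>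
   card {rs. distinct rs \<and> set rs = S \<and> gr rs} = 2 ^ n"
proof (induction n arbitrary: S)
  case 0
  then obtain a where S: "S = {a}" using card_1_singletonE[of S] by auto
  have "{rs. distinct rs \<and> set rs = S \<and> gr rs} = {[a]}"
  proof (intro set_eqI iffI)
    fix rs assume "rs \<in> {rs. distinct rs \<and> set rs = S \<and> gr rs}"
    hence "distinct rs" "set rs = {a}" using S by auto
    hence "length rs = 1" using distinct_card[of rs] by simp
    thus "rs \<in> {[a]}" using \<open>set rs = {a}\<close>
      by (cases rs) auto
  qed (auto simp: S)
  then show ?case by simp
next
  case (Suc n)
  define F where "F T = {rs. distinct rs \<and> set rs = T \<and> gr rs}" for T
  define m1 where "m1 = Min S"
  define m2 where "m2 = Min (S - {m1})"
  have fS: "finite S" using Suc by simp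
  have ne: "S \<noteq> {}" using Suc.prems by auto
  have m1S: "m1 \<in> S" unfolding m1_def using fS ne by simp
  have c1: "card (S - {m1}) = Suc n" using Suc.prems m1S by simp
  have ne2: "S - {m1} \<noteq> {}" using c1 by (metis card.empty nat.distinct(1))
  have m2S: "m2 \<in> S - {m1}" unfolding m2_def using fS ne2 by (intro Min_in) auto
  have c2: "card (S - {m2}) = Suc n" using Suc.prems m2S by simp
  have l1: "\<forall>y\<in>S. m1 \<le> y" unfolding m1_def using fS by simp
  have l2: "\<forall>y\<in>S - {m1}. m2 \<le> y" unfolding m2_def using fS by simp
  have k1: "{y \<in> S. y < m1} = {}" using l1 by auto
  have k2: "{y \<in> S. y < m2} \<subseteq> {m1}" using l2 by (auto simp: not_less[symmetric])
  have eq: "F S = Cons m1 ` F (S - {m1}) \<union> Cons m2 ` F (S - {m2})"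
  proof (intro set_eqI iffI)
    fix rs assume "rs \<in> F S"
    hence rs: "distinct rs" "set rs = S" "gr rs" by (auto simp: F_def)
    then obtain x rs' where rc: "rs = x # rs'" using ne by (cases rs) auto
    have xS: "x \<in> S" and st: "set rs' = S - {x}" and dd: "distinct rs'" and g': "gr rs'"
      and cd: "card {y \<in> set rs'. y < x} \<le> 1" using rs rc by auto
    have "{y \<in> set rs'. y < x} = {y \<in> S. y < x}" using st by auto
    hence "x = m1 \<or> x = m2" using minA[OF fS xS] cd unfolding m1_def m2_def by simp
    moreover have "rs' \<in> F (S - {x})" using st dd g' by (simp add: F_def)
    ultimately show "rs \<in> Cons m1 ` F (S - {m1}) \<union> Cons m2 ` F (S - {m2})" using rc by auto
  next
    fix rs assume "rs \<in> Cons m1 ` F (S - {m1}) \<union> Cons m2 ` F (S - {m2})"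
    then obtain x rs' where rc: "rs = x # rs'" and x: "x = m1 \<or> x = m2" and r': "rs' \<in> F (S - {x})"
      by auto
    have xS: "x \<in> S" using x m1S m2S by auto
    have st: "set rs' = S - {x}" and dd: "distinct rs'" and g': "gr rs'" using r' by (auto simp: F_def)
    have "{y \<in> set rs'. y < x} = {y \<in> S. y < x}" using st by auto
    moreover have "card {y \<in> S. y < x} \<le> 1"
    proof (cases "x = m1")
      case True then show ?thesis unfolding True k1 by simp
    next
      case False
      hence "x = m2" using x by simp
      hence "card {y \<in> S. y < x} \<le> card {m1}" using k2 by (intro card_mono) auto
      then show ?thesis by simp
    qed
    ultimately have cx: "card {y \<in> set rs'. y < x} \<le> 1" by simp
    have xn: "x \<notin> set rs'" using st by simp
    have "distinct rs" using rc dd xn by simp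
    moreover have "set rs = S" using rc st xS by auto
    moreover have "gr rs" using rc g' cx by simp
    ultimately show "rs \<in> F S" unfolding F_def by blast
  qed
  have fin: "finite (F T)" if "finite T" for T
  proof -
    have "F T \<subseteq> {xs. set xs \<subseteq> T \<and> length xs \<le> card T}"
    proof
      fix xs assume "xs \<in> F T"
      hence "distinct xs" "set xs = T" unfolding F_def by auto
      thus "xs \<in> {xs. set xs \<subseteq> T \<and> length xs \<le> card T}" using distinct_card[of xs] by simp
    qed
    thus ?thesis using finite_lists_length_le[OF that] by (rule finite_subset)
  qed
  have "m1 \<noteq> m2" using m2S by auto
  hence disj: "Cons m1 ` F (S - {m1}) \<inter> Cons m2 ` F (S - {m2}) = {}" by blast
  have ff1: "finite (S - {m1})" "finite (S - {m2})" using fS by auto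
  have f1: "finite (Cons m1 ` F (S - {m1}))" by (rule finite_imageI[OF fin[OF ff1(1)]])
  have f2: "finite (Cons m2 ` F (S - {m2}))" by (rule finite_imageI[OF fin[OF ff1(2)]])
  have "card (F S) = card (Cons m1 ` F (S - {m1})) + card (Cons m2 ` F (S - {m2}))"
    unfolding eq by (rule card_Un_disjoint[OF f1 f2 disj])
  also have "card (Cons m1 ` F (S - {m1})) = card (F (S - {m1}))"
    by (rule card_image) (simp add: inj_on_def)
  also have "card (Cons m2 ` F (S - {m2})) = card (F (S - {m2}))"
    by (rule card_image) (simp add: inj_on_def)
  also have "card (F (S - {m1})) = 2 ^ n" using Suc.IH[OF ff1(1) c1] by (simp add: F_def)
  also have "card (F (S - {m2})) = 2 ^ n" using Suc.IH[OF ff1(2) c2] by (simp add: F_def)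
  finally have "card (F S) = 2 ^ Suc n" by simp
  thus ?case unfolding F_def .
qed

theorem mainTheorem10:
  fixes n :: nat
  assumes "n \<ge> 1"
  shows "card {\<pi> :: nat list. distinct \<pi> \<and> set \<pi> = {1..n} \<and>
                 (\<forall>row \<in> set (schroeder_P \<pi>). length row \<le> 2)} = 2 ^ (n - 1)"
proof -
  let ?S = "{\<pi> :: nat list. distinct \<pi> \<and> set \<pi> = {1..n} \<and>
                 (\<forall>row \<in> set (schroeder_P \<pi>). length row \<le> 2)}"
  let ?G = "{rs. distinct rs \<and> set rs = {1..n} \<and> gr rs}"
  have ne: "{1..n} \<noteq> {}" using assms by simp
  have key: "\<pi> \<in> ?S \<longleftrightarrow> rev \<pi> \<in> ?G" for \<pi>
  proof (cases "distinct \<pi> \<and> set \<pi> = {1..n}")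
    case True
    hence "\<pi> \<noteq> []" using ne by auto
    then show ?thesis using rows_iff[of \<pi>] True by simp
  next
    case False
    then show ?thesis by auto
  qed
  have eqG: "rev ` ?S = ?G"
  proof (intro set_eqI iffI)
    fix rs assume "rs \<in> rev ` ?S"
    then obtain \<pi> where "rs = rev \<pi>" "\<pi> \<in> ?S" by blast
    thus "rs \<in> ?G" using key by blast
  next
    fix rs assume r: "rs \<in> ?G"
    hence "rev rs \<in> ?S" using key[of "rev rs"] by simp
    thus "rs \<in> rev ` ?S" by (rule rev_image_eqI) simp
  qed
  have "inj_on rev ?S" by (simp add: inj_on_def)
  hence "card (rev ` ?S) = card ?S" by (rule card_image)
  hence c: "card ?S = card ?G" unfolding eqG by simp
  have "card {1..n} = Suc (n - 1)" using assms by simp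
  hence "card ?G = 2 ^ (n - 1)" by (rule count[OF finite_atLeastAtMost])
  thus ?thesis using c by simp
qed

end
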